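(* Let $f:[0,1]\to\mathbb{R}$ be continuous with $f(0),f(1)\in\mathbb{Z}$, and let $n$ be a positive integer. Then $$d_\infty(f,\mathscr{B}_n)\le \frac{5}{4}\,\omega_f(n^{-1/2})+\rho(f,n),$$ where $$\rho(f,n):=\min_{t\in[0,n/2]\cap\mathbb{Z}}\left\{\max\left(\omega_f\Big(\frac{t}{n}\Big),\ \frac{1}{2(n+1-2t)}\right)+\frac{1}{\sqrt{2(t+1)}}\right\},$$ and moreover $$\rho(f,n)\le \omega_f\Big(\frac{1}{2}n^{-1/3}\Big)+2n^{-1/3}.$$ In particular, $$d_\infty(f,\mathscr{B}_n)\le \frac{9}{4}\,\omega_f(n^{-1/3})+2n^{-1/3}.$$
   Context: All functions are real-valued on $[0,1]$. For $k=0,\dots,n$, let $p_{n,k}(x):=\binom{n}{k}x^k(1-x)^{n-k}$. The Bernstein lattice $\mathscr{B}_n$ is the set of polynomials $\sum_{k=0}^n q_k p_{n,k}$ with $q_0,\dots,q_n\in\mathbb{Z}$ (the lattice generated by $p_{n,0},\dots,p_{n,n}$). For $g,h$ continuous on $[0,1]$, $d_\infty(g,h):=\sup_{x\in[0,1]}|g(x)-h(x)|$, and for a set $S$ of functions, $d_\infty(f,S):=\inf_{P\in S}d_\infty(f,P)$. The modulus of continuity of $f$ on $[0,1]$ is $\omega_f(\delta):=\sup\{|f(x)-f(y)|: x,y\in[0,1],\ |x-y|\le\delta\}$. *)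

theory Defs
  imports "HOL-Analysis.Analysis"
begin

definition bern :: "nat \<Rightarrow> nat \<Rightarrow> real \<Rightarrow> real" where
  "bern n k x = real (n choose k) * x ^ k * (1 - x) ^ (n - k)"

definition bernstein_lattice :: "nat \<Rightarrow> (real \<Rightarrow> real) set" where
  "bernstein_lattice n =
     {P. \<exists>q :: nat \<Rightarrow> int. P = (\<lambda>x. \<Sum>k\<le>n. real_of_int (q k) * bern n k x)}"

definition dinf :: "(real \<Rightarrow> real) \<Rightarrow> (real \<Rightarrow> real) \<Rightarrow> real" where
  "dinf g h = (SUP x\<in>{0..1}. \<bar>g x - h x\<bar>)"

definition dinf_set :: "(real \<Rightarrow> real) \<Rightarrow> (real \<Rightarrow> real) set \<Rightarrow> real" where
  "dinf_set f S = (INF P\<in>S. dinf f P)"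

definition modcont :: "(real \<Rightarrow> real) \<Rightarrow> real \<Rightarrow> real" where
  "modcont f \<delta> = (SUP xy\<in>{(x, y). x \<in> {0..1} \<and> y \<in> {0..1} \<and> \<bar>x - y\<bar> \<le> \<delta>}.
                      \<bar>f (fst xy) - f (snd xy)\<bar>)"

definition rho :: "(real \<Rightarrow> real) \<Rightarrow> nat \<Rightarrow> real" where
  "rho f n = Min ((\<lambda>t::nat. max (modcont f (real t / real n)) (1 / (2 * (real n + 1 - 2 * real t)))
                      + 1 / sqrt (2 * (real t + 1))) ` {0 .. n div 2})"

end

theory Submission
  imports Defs
begin



lemma bern_eq: "bern = Bernstein" by (auto simp: fun_eq_iff bern_def Bernstein_def)

definition mcset :: "real \<Rightarrow> (real \<times> real) set" where
  "mcset \<delta> = {(x, y). x \<in> {0..1} \<and> y \<in> {0..1} \<and> \<bar>x - y\<bar> \<le> \<delta>}"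

lemma modcont_alt: "modcont f \<delta> = (SUP xy\<in>mcset \<delta>. \<bar>f (fst xy) - f (snd xy)\<bar>)"
  by (simp add: modcont_def mcset_def)

lemma cont_bound:
  assumes "continuous_on {0..1} (f::real\<Rightarrow>real)"
  obtains B where "\<And>x. x \<in> {0..1::real} \<Longrightarrow> \<bar>f x\<bar> \<le> B"
proof -
  have "compact (f ` {0..1})" by (rule compact_continuous_image[OF assms]) simp
  then have "bounded (f ` {0..1})" by (rule compact_imp_bounded)
  then obtain B where "\<forall>y\<in>f ` {0..1}. norm y \<le> B" by (auto simp: bounded_iff)
  then show ?thesis by (intro that) auto
qed

lemma mc_bdd:
  assumes "continuous_on {0..1} (f::real\<Rightarrow>real)"
  shows "bdd_above ((\<lambda>xy. \<bar>f (fst xy) - f (snd xy)\<bar>) ` mcset \<delta>)"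
proof -
  obtain B where B: "\<And>x. x \<in> {0..1::real} \<Longrightarrow> \<bar>f x\<bar> \<le> B" using cont_bound[OF assms] by blast
  show ?thesis
  proof (rule bdd_aboveI2)
    fix xy assume "xy \<in> mcset \<delta>"
    then have "fst xy \<in> {0..1}" "snd xy \<in> {0..1}" by (auto simp: mcset_def)
    then show "\<bar>f (fst xy) - f (snd xy)\<bar> \<le> 2 * B" using B[of "fst xy"] B[of "snd xy"] by linarith
  qed
qed

lemma mc_le:
  assumes "continuous_on {0..1} (f::real\<Rightarrow>real)" "x \<in> {0..1}" "y \<in> {0..1}" "\<bar>x - y\<bar> \<le> \<delta>"
  shows "\<bar>f x - f y\<bar> \<le> modcont f \<delta>"
proof -
  have "(x, y) \<in> mcset \<delta>" using assms by (auto simp: mcset_def)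
  then show ?thesis unfolding modcont_alt
    using cSUP_upper[OF _ mc_bdd[OF assms(1)], of "(x,y)" \<delta>] by auto
qed

lemma mc_nonneg:
  assumes "continuous_on {0..1} (f::real\<Rightarrow>real)" "0 \<le> \<delta>"
  shows "0 \<le> modcont f \<delta>"
  using mc_le[OF assms(1), of 0 0 \<delta>] assms by auto

lemma mc_mono:
  assumes "continuous_on {0..1} (f::real\<Rightarrow>real)" "0 \<le> \<delta>" "\<delta> \<le> \<delta>'"
  shows "modcont f \<delta> \<le> modcont f \<delta>'"
  unfolding modcont_alt
proof (rule cSUP_subset_mono)
  show "mcset \<delta> \<noteq> {}" using assms by (auto simp: mcset_def intro!: exI[of _ 0])
  show "bdd_above ((\<lambda>xy. \<bar>f (fst xy) - f (snd xy)\<bar>) ` mcset \<delta>')" by (rule mc_bdd[OF assms(1)])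
  show "mcset \<delta> \<subseteq> mcset \<delta>'" using assms by (auto simp: mcset_def)
qed auto

lemma mc_chain:
  assumes "continuous_on {0..1} (f::real\<Rightarrow>real)" "0 \<le> \<delta>"
  shows "\<And>x y. x \<in> {0..1} \<Longrightarrow> y \<in> {0..1} \<Longrightarrow> \<bar>x - y\<bar> \<le> real N * \<delta> \<Longrightarrow>
     \<bar>f x - f y\<bar> \<le> real N * modcont f \<delta>"
proof (induction N)
  case 0
  then show ?case by simp
next
  case (Suc N)
  define z where "z = (real N * y + x) / (real N + 1)"
  have hN: "real N + 1 \<noteq> 0" "1 + real N \<noteq> 0" by linarith+
  have z01: "z \<in> {0..1}"
  proof -
    have "real N * y + x \<le> real N * 1 + 1" using Suc.prems by (intro add_mono mult_left_mono) auto
    then show ?thesis using Suc.prems unfolding z_def by (auto simp: divide_le_eq_1)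
  qed
  have zy: "z - y = (x - y) / (real N + 1)" unfolding z_def using hN by (simp add: field_simps)
  have d1: "\<bar>z - y\<bar> \<le> \<delta>"
  proof -
    have "\<bar>z - y\<bar> = \<bar>x - y\<bar> / (real N + 1)" unfolding zy by (simp add: abs_divide)
    also have "\<dots> \<le> \<delta>" using Suc.prems(3) by (simp add: divide_le_eq algebra_simps)
    finally show ?thesis .
  qed
  have d2: "\<bar>x - z\<bar> \<le> real N * \<delta>"
  proof -
    have "x - z = (x - y) * real N / (real N + 1)" unfolding z_def using hN by (simp add: field_simps)
    then have "\<bar>x - z\<bar> = \<bar>x - y\<bar> * real N / (real N + 1)" by (simp add: abs_mult)
    also have "\<dots> \<le> (real N + 1) * \<delta> * real N / (real N + 1)"
      by (intro divide_right_mono mult_right_mono) (use Suc.prems(3) in \<open>auto simp: add.commute\<close>)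
    also have "\<dots> = real N * \<delta>" using hN by simp
    finally show ?thesis .
  qed
  have "\<bar>f x - f y\<bar> \<le> \<bar>f x - f z\<bar> + \<bar>f z - f y\<bar>" by linarith
  also have "\<dots> \<le> real N * modcont f \<delta> + modcont f \<delta>"
    using Suc.IH[OF Suc.prems(1) z01 d2] mc_le[OF assms(1) z01 Suc.prems(2) d1] by linarith
  finally show ?case by (simp add: algebra_simps)
qed

lemma mc_quad:
  assumes "continuous_on {0..1} (f::real\<Rightarrow>real)" "0 < \<delta>" "x \<in> {0..1}" "y \<in> {0..1}"
  shows "\<bar>f x - f y\<bar> \<le> modcont f \<delta> * (1 + (x - y)^2 / \<delta>^2)"
proof -
  define u where "u = \<bar>x - y\<bar> / \<delta>"
  have u0: "0 \<le> u" using assms by (simp add: u_def)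
  have q: "(x - y)^2 / \<delta>^2 = u^2" by (simp add: u_def power_divide)
  have w: "0 \<le> modcont f \<delta>" using mc_nonneg[OF assms(1)] assms by auto
  show ?thesis
  proof (cases "u \<le> 1")
    case True
    then have "\<bar>x - y\<bar> \<le> \<delta>" using assms by (simp add: u_def divide_le_eq)
    then have "\<bar>f x - f y\<bar> \<le> modcont f \<delta>" using mc_le assms by blast
    also have "\<dots> \<le> modcont f \<delta> * (1 + (x - y)^2 / \<delta>^2)" using w by (simp add: mult_le_cancel_left1)
    finally show ?thesis .
  next
    case False
    define N where "N = nat \<lceil>u\<rceil>"
    have N1: "u \<le> real N" "real N \<le> u + 1" unfolding N_def using u0 by linarith+
    have "\<bar>x - y\<bar> \<le> real N * \<delta>" using N1 assms by (simp add: u_def divide_le_eq)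
    then have "\<bar>f x - f y\<bar> \<le> real N * modcont f \<delta>" using mc_chain[OF assms(1)] assms by auto
    also have "\<dots> \<le> (1 + u^2) * modcont f \<delta>"
    proof (rule mult_right_mono[OF _ w])
      have "u \<le> u^2" using False by (simp add: power2_eq_square)
      then show "real N \<le> 1 + u^2" using N1 by linarith
    qed
    finally show ?thesis using q by (simp add: mult.commute)
  qed
qed

lemma bern_var:
  assumes "n > 0"
  shows "(\<Sum>k\<le>n. (x - real k / real n)^2 * Bernstein n k x) = x * (1 - x) / real n"
proof -
  define c where "c = 1 / real n"
  have hn: "real n * c = 1" using assms by (simp add: c_def)
  have kc: "\<And>k. real k / real n = real k * c" by (simp add: c_def)
  have "(\<Sum>k\<le>n. (x - real k / real n)^2 * Bernstein n k x) =
     (\<Sum>k\<le>n. x^2 * Bernstein n k x - (2 * x * c) * (real k * Bernstein n k x)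
       + c^2 * (real k * (real k - 1) * Bernstein n k x) + c^2 * (real k * Bernstein n k x))"
    unfolding kc by (rule sum.cong) (simp_all add: power2_eq_square algebra_simps)
  also have "\<dots> = x^2 * (\<Sum>k\<le>n. Bernstein n k x) - (2 * x * c) * (\<Sum>k\<le>n. real k * Bernstein n k x)
       + c^2 * (\<Sum>k\<le>n. real k * (real k - 1) * Bernstein n k x) + c^2 * (\<Sum>k\<le>n. real k * Bernstein n k x)"
    by (simp only: sum.distrib sum_subtractf sum_distrib_left)
  also have "\<dots> = x^2 * 1 - (2 * x * c) * (real n * x) + c^2 * (real n * (real n - 1) * x\<^sup>2) + c^2 * (real n * x)"
    by (simp only: sum_Bernstein sum_k_Bernstein sum_kk_Bernstein)
  also have "\<dots> = x^2 - 2 * x * x * (real n * c) + (real n * c) * (real n * c) * x^2 - (real n * c) * c * x^2 + (real n * c) * c * x"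
    by (simp add: power2_eq_square algebra_simps)
  also have "\<dots> = c * x * (1 - x)"
    unfolding hn by (simp add: power2_eq_square algebra_simps)
  finally show ?thesis by (simp add: c_def)
qed




lemma bern_approx:
  assumes "continuous_on {0..1} (f::real\<Rightarrow>real)" "n > 0" "x \<in> {0..1}"
  shows "\<bar>f x - (\<Sum>k\<le>n. f (real k / real n) * Bernstein n k x)\<bar> \<le> 5/4 * modcont f (1 / sqrt (real n))"
proof -
  define \<delta> where "\<delta> = 1 / sqrt (real n)"
  have d: "0 < \<delta>" "\<delta>^2 = 1 / real n" using assms by (auto simp: \<delta>_def power_divide)
  define w where "w = modcont f \<delta>"
  have w: "0 \<le> w" using mc_nonneg[OF assms(1)] d by (simp add: w_def)
  have B: "\<And>k. 0 \<le> Bernstein n k x" using assms by (auto intro: Bernstein_nonneg)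
  have "(\<Sum>k\<le>n. (f x - f (real k / real n)) * Bernstein n k x) = f x * (\<Sum>k\<le>n. Bernstein n k x) - (\<Sum>k\<le>n. f (real k / real n) * Bernstein n k x)"
    by (simp only: left_diff_distrib sum_subtractf sum_distrib_left)
  then have e1: "f x - (\<Sum>k\<le>n. f (real k / real n) * Bernstein n k x) = (\<Sum>k\<le>n. (f x - f (real k / real n)) * Bernstein n k x)"
    by simp
  have "\<bar>f x - (\<Sum>k\<le>n. f (real k / real n) * Bernstein n k x)\<bar> \<le> (\<Sum>k\<le>n. \<bar>(f x - f (real k / real n)) * Bernstein n k x\<bar>)"
    unfolding e1 by (rule sum_abs)
  also have "\<dots> = (\<Sum>k\<le>n. \<bar>f x - f (real k / real n)\<bar> * Bernstein n k x)"
    using B by (simp add: abs_mult)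
  also have "\<dots> \<le> (\<Sum>k\<le>n. (w * Bernstein n k x + (w * real n) * ((x - real k / real n)^2 * Bernstein n k x)))"
  proof (rule sum_mono)
    fix k assume "k \<in> {..n}"
    then have "real k / real n \<in> {0..1}" using assms by auto
    then have "\<bar>f x - f (real k / real n)\<bar> \<le> w * (1 + (x - real k / real n)^2 / \<delta>^2)"
      unfolding w_def using mc_quad[OF assms(1) d(1) assms(3)] by blast
    also have "\<dots> = w + (w * real n) * (x - real k / real n)^2" using d by (simp add: algebra_simps)
    finally have "\<bar>f x - f (real k / real n)\<bar> * Bernstein n k x \<le> (w + (w * real n) * (x - real k / real n)^2) * Bernstein n k x"
      by (rule mult_right_mono[OF _ B])
    then show "\<bar>f x - f (real k / real n)\<bar> * Bernstein n k x \<le> w * Bernstein n k x + (w * real n) * ((x - real k / real n)^2 * Bernstein n k x)"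
      by (simp add: algebra_simps)
  qed
  also have "\<dots> = w * (\<Sum>k\<le>n. Bernstein n k x) + (w * real n) * (\<Sum>k\<le>n. (x - real k / real n)^2 * Bernstein n k x)"
    by (simp only: sum.distrib sum_distrib_left)
  also have "\<dots> = w * (1 + x * (1 - x))" unfolding bern_var[OF assms(2)] sum_Bernstein using assms(2) by (simp add: field_simps)
  also have "\<dots> \<le> w * (5/4)"
  proof (rule mult_left_mono[OF _ w])
    have "0 \<le> (x - 1/2)^2" by simp
    then show "1 + x * (1 - x) \<le> 5/4" by (simp add: power2_eq_square algebra_simps)
  qed
  finally show ?thesis by (simp add: w_def \<delta>_def mult.commute)
qed




lemma binom_ratio_nat: "k < n \<Longrightarrow> (Suc k) * (n choose Suc k) = (n - k) * (n choose k)"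
proof -
  assume "k < n"
  have a: "Suc k * (n choose Suc k) = n * ((n - 1) choose k)"
    using times_binomial_minus1_eq[of "Suc k" n] by simp
  have b: "(n - k) * (n choose k) = n * ((n - 1) choose k)" by (rule binomial_absorb_comp)
  show ?thesis using a b by simp
qed

lemma bern_ratio:
  assumes "k < n"
  shows "real (Suc k) * (1 - x) * Bernstein n (Suc k) x = real (n - k) * x * Bernstein n k x"
proof -
  have c: "real (Suc k) * real (n choose Suc k) = real (n - k) * real (n choose k)"
    using binom_ratio_nat[OF assms] by (metis of_nat_mult)
  have p: "(1 - x) ^ (n - Suc k) * (1 - x) = (1 - x) ^ (n - k)"
    using assms by (metis Suc_diff_Suc power_Suc2)
  have "real (Suc k) * (1 - x) * Bernstein n (Suc k) x
      = (real (Suc k) * real (n choose Suc k)) * x ^ Suc k * ((1 - x) ^ (n - Suc k) * (1 - x))"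
    by (simp add: Bernstein_def algebra_simps)
  also have "\<dots> = (real (n - k) * real (n choose k)) * x ^ Suc k * (1 - x) ^ (n - k)"
    unfolding c p ..
  also have "\<dots> = real (n - k) * x * Bernstein n k x"
    by (simp add: Bernstein_def algebra_simps)
  finally show ?thesis .
qed

lemma amgm_bern:
  assumes "0 < k" "k < n" "0 \<le> x" "x \<le> 1"
  shows "x ^ k * (1 - x) ^ (n - k) \<le> (real k / real n) ^ k * (real (n - k) / real n) ^ (n - k)"
proof (cases "x = 0 \<or> x = 1")
  case True
  then show ?thesis using assms by (auto simp: zero_power)
next
  case False
  then have x: "0 < x" "x < 1" using assms by auto
  define m where "m = n - k"
  have m: "0 < m" "real m = real n - real k" using assms by (auto simp: m_def)
  define u where "u = x * real n / real k"
  define v where "v = (1 - x) * real n / real m"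
  have u: "0 < u" using x assms by (simp add: u_def)
  have v: "0 < v" using x m by (simp add: v_def)
  have xu: "x = (real k / real n) * u" using assms by (simp add: u_def)
  have xv: "1 - x = (real m / real n) * v" using assms m by (simp add: v_def)
  have "ln (u ^ k * v ^ m) = real k * ln u + real m * ln v"
    using u v by (simp add: ln_mult ln_realpow)
  also have "\<dots> \<le> real k * (u - 1) + real m * (v - 1)"
    by (intro add_mono mult_left_mono ln_le_minus_one u v) auto
  also have "\<dots> = 0"
  proof -
    have hk: "real n = real k + real m" using m(2) by simp
    show ?thesis unfolding u_def v_def hk using assms m(1) by (simp add: field_simps)
  qed
  finally have "u ^ k * v ^ m \<le> 1"
    using u v by (simp add: ln_le_zero_iff)
  then have "(real k / real n) ^ k * (real m / real n) ^ m * (u ^ k * v ^ m)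
      \<le> (real k / real n) ^ k * (real m / real n) ^ m * 1"
    by (intro mult_left_mono) auto
  moreover have "x ^ k * (1 - x) ^ m = (real k / real n) ^ k * (real m / real n) ^ m * (u ^ k * v ^ m)"
  proof -
    have "x ^ k = (real k / real n) ^ k * u ^ k" by (subst xu) (rule power_mult_distrib)
    moreover have "(1 - x) ^ m = (real m / real n) ^ m * v ^ m" by (subst xv) (rule power_mult_distrib)
    ultimately show ?thesis by simp
  qed
  ultimately show ?thesis by (simp add: m_def)
qed

definition Mx :: "nat \<Rightarrow> nat \<Rightarrow> real" where
  "Mx n k = real (n choose k) * (real k / real n) ^ k * (real (n - k) / real n) ^ (n - k)"

lemma bern_le_Mx:
  assumes "0 < k" "k < n" "0 \<le> x" "x \<le> 1"
  shows "Bernstein n k x \<le> Mx n k"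
  unfolding Bernstein_def Mx_def mult.assoc
  by (intro mult_left_mono amgm_bern assms) auto

lemma e_step:
  assumes "1 \<le> m"
  shows "((real m + 1) / real m) ^ m \<le> ((real m + 2) / (real m + 1)) ^ (m + 1)"
proof -
  define r where "r = (real m + 2) * real m / (real m + 1)^2"
  have "0 \<le> real m * real m + real m * 2" by simp
  then have d1p: "0 < 1 + (real m * real m + real m * 2)" by linarith
  then have d1: "1 + (real m * real m + real m * 2) \<noteq> 0" by linarith
  have d2: "(real m + 1)^2 \<noteq> 0" "1 + real m \<noteq> 0" by simp_all
  have r: "r = 1 + (- 1 / (real m + 1)^2)" unfolding r_def using d1 d2 by (simp add: field_simps power2_eq_square)
  have bern: "1 + real m * (- 1 / (real m + 1)^2) \<le> r ^ m"
  proof -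
    have "1 \<le> (real m + 1)^2" by (simp add: one_le_power)
    then have "1 / (real m + 1)^2 \<le> 1" by (simp add: divide_le_eq_1)
    then show ?thesis unfolding r by (intro Bernoulli_inequality) simp
  qed
  have e0: "0 \<le> ((real m + 1) / real m) ^ m" by simp
  have split: "((real m + 2) / (real m + 1)) ^ (m + 1)
      = ((real m + 1) / real m) ^ m * (r ^ m * ((real m + 2) / (real m + 1)))"
  proof -
    have m0: "0 < real m" using assms by simp
    have d3: "real m + (real m * (real m * real m) + real m * (real m * 2)) \<noteq> 0"
      using m0 by (intro order.strict_implies_not_eq[symmetric] add_pos_nonneg) auto
    have "(real m + 2) / (real m + 1) = ((real m + 1) / real m) * r"
      using assms d3 m0 by (simp add: r_def field_simps power2_eq_square)
    then have "((real m + 2) / (real m + 1)) ^ m = ((real m + 1) / real m) ^ m * r ^ m"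
      by (simp only: power_mult_distrib)
    then show ?thesis by (simp add: algebra_simps)
  qed
  have "1 \<le> (1 + real m * (- 1 / (real m + 1)^2)) * ((real m + 2) / (real m + 1))"
    using assms by (simp add: field_simps power2_eq_square) (simp add: divide_le_eq_1_pos[OF d1p])
  also have "\<dots> \<le> r ^ m * ((real m + 2) / (real m + 1))"
    by (intro mult_right_mono bern) auto
  finally have "1 \<le> r ^ m * ((real m + 2) / (real m + 1))" .
  then have "((real m + 1) / real m) ^ m * 1 \<le> ((real m + 1) / real m) ^ m * (r ^ m * ((real m + 2) / (real m + 1)))"
    by (intro mult_left_mono e0)
  then show ?thesis unfolding split by simp
qed

lemma e_mono:
  assumes "1 \<le> m" "m \<le> n"
  shows "((real m + 1) / real m) ^ m \<le> ((real n + 1) / real n) ^ n"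
  using assms(2)
proof (induction n rule: dec_induct)
  case base then show ?case by simp
next
  case (step j)
  have "1 \<le> j" using assms step by simp
  from e_step[OF this] have "((real j + 1) / real j) ^ j \<le> ((real (Suc j) + 1) / real (Suc j)) ^ (Suc j)"
    by (simp add: add_ac)
  with step.IH show ?case by linarith
qed




lemma Mx_alt:
  assumes "0 < n" "k \<le> n"
  shows "Mx n k = real (n choose k) * real k ^ k * real (n - k) ^ (n - k) / real n ^ n"
proof -
  have "real n ^ k * real n ^ (n - k) = real n ^ n" using assms by (simp flip: power_add)
  then show ?thesis unfolding Mx_def using assms by (simp add: power_divide field_simps)
qed

lemma Mx_mono:
  assumes "0 < k" "k < n"
  shows "Mx (Suc n) k \<le> Mx n k"
proof -
  define m where "m = n - k"
  have m: "1 \<le> m" "m \<le> n" "Suc n - k = Suc m" using assms by (auto simp: m_def)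
  have cb: "real (Suc n choose k) * (real m + 1) = (real n + 1) * real (n choose k)"
  proof -
    have "(Suc n - k) * (Suc n choose k) = Suc n * (n choose k)"
      using binomial_absorb_comp[of "Suc n" k] by simp
    then have "Suc m * (Suc n choose k) = Suc n * (n choose k)" unfolding m(3) .
    then have "real (Suc m * (Suc n choose k)) = real (Suc n * (n choose k))" by (simp only:)
    then show ?thesis by (simp only: of_nat_mult of_nat_Suc mult.commute add.commute)
  qed
  have A: "Mx (Suc n) k = real (n choose k) * real k ^ k * (real m + 1) ^ m / (real n + 1) ^ n"
  proof -
    have "Mx (Suc n) k = real (Suc n choose k) * real k ^ k * (real m + 1) ^ Suc m / (real n + 1) ^ Suc n"
      using assms m by (subst Mx_alt) (auto simp: add.commute)
    also have "\<dots> = (real (Suc n choose k) * (real m + 1)) * real k ^ k * (real m + 1) ^ m / ((real n + 1) * (real n + 1) ^ n)"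
      by (simp add: algebra_simps)
    also have "\<dots> = real (n choose k) * real k ^ k * (real m + 1) ^ m / (real n + 1) ^ n"
      unfolding cb mult.assoc by simp
    finally show ?thesis .
  qed
  have B: "Mx n k = real (n choose k) * real k ^ k * real m ^ m / real n ^ n"
    using assms by (subst Mx_alt) (auto simp: m_def)
  define Em where "Em = ((real m + 1) / real m) ^ m"
  define En where "En = ((real n + 1) / real n) ^ n"
  have E: "Em \<le> En" unfolding Em_def En_def by (rule e_mono[OF m(1,2)])
  have em: "(real m + 1) ^ m = Em * real m ^ m" using m by (simp add: Em_def power_divide)
  have en: "(real n + 1) ^ n = En * real n ^ n" using m assms by (simp add: En_def power_divide)
  have Em0: "0 < Em" using m by (simp add: Em_def)
  have npos: "0 < real n ^ n" using assms by simp
  have "(real m + 1) ^ m / (real n + 1) ^ n = (Em / En) * (real m ^ m / real n ^ n)"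
    unfolding em en by simp
  also have "\<dots> \<le> 1 * (real m ^ m / real n ^ n)"
    using E Em0 by (intro mult_right_mono) auto
  finally have "(real m + 1) ^ m / (real n + 1) ^ n \<le> real m ^ m / real n ^ n" by simp
  then have "real (n choose k) * real k ^ k * ((real m + 1) ^ m / (real n + 1) ^ n)
     \<le> real (n choose k) * real k ^ k * (real m ^ m / real n ^ n)"
    by (intro mult_left_mono) auto
  then show ?thesis unfolding A B by simp
qed

lemma Mx_chain:
  assumes "0 < k" "2 * k \<le> n"
  shows "Mx n k \<le> Mx (2 * k) k"
  using assms(2)
proof (induction n rule: dec_induct)
  case base then show ?case by simp
next
  case (step j)
  have "Mx (Suc j) k \<le> Mx j k" using assms step by (intro Mx_mono) auto
  with step.IH show ?case by linarith
qed

lemma Mx_central: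
  assumes "0 < k"
  shows "Mx (2 * k) k = real ((2 * k) choose k) / 4 ^ k"
proof -
  have "Mx (2 * k) k = real ((2 * k) choose k) * real k ^ k * real k ^ k / real (2 * k) ^ (2 * k)"
    using assms by (subst Mx_alt) auto
  also have "real (2 * k) ^ (2 * k) = 4 ^ k * (real k ^ k * real k ^ k)"
  proof -
    have "real (2 * k) ^ (2 * k) = (real (2 * k) ^ 2) ^ k" by (simp only: power_mult)
    also have "real (2 * k) ^ 2 = 4 * (real k * real k)" by (simp add: power2_eq_square)
    also have "(4 * (real k * real k)) ^ k = 4 ^ k * (real k ^ k * real k ^ k)" by (simp only: power_mult_distrib)
    finally show ?thesis .
  qed
  finally show ?thesis using assms by simp
qed

lemma central_aux:
  fixes Z X Y k :: nat
  assumes "Suc k * Z = (2 * Suc k) * X" "Suc k * X = (2 * k + 1) * Y"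
  shows "Suc k * Z = 2 * (2 * k + 1) * Y"
proof -
  have "Suc k * Z = 2 * (Suc k * X)" using assms(1) by (simp only: mult.assoc mult.left_commute)
  also have "\<dots> = 2 * (2 * k + 1) * Y" using assms(2) by simp
  finally show ?thesis .
qed

lemma central_rec: "real (Suc k) * real ((2 * Suc k) choose Suc k) = 2 * (2 * real k + 1) * real ((2 * k) choose k)"
proof -
  have a: "Suc k * ((2 * Suc k) choose Suc k) = (2 * Suc k) * ((2 * k + 1) choose k)"
    using times_binomial_minus1_eq[of "Suc k" "2 * Suc k"] by (simp del: binomial_Suc_Suc)
  have b: "(2 * k + 1 - k) * ((2 * k + 1) choose k) = (2 * k + 1) * ((2 * k) choose k)"
    using binomial_absorb_comp[of "2 * k + 1" k] by (simp del: binomial_Suc_Suc)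
  have b': "Suc k * ((2 * k + 1) choose k) = (2 * k + 1) * ((2 * k) choose k)"
    using b by (simp add: Suc_diff_le del: binomial_Suc_Suc)
  have E: "Suc k * ((2 * Suc k) choose Suc k) = 2 * (2 * k + 1) * ((2 * k) choose k)"
    by (rule central_aux[OF a b'])
  have "real (Suc k * ((2 * Suc k) choose Suc k)) = real (2 * (2 * k + 1) * ((2 * k) choose k))"
    by (simp only: E)
  then show ?thesis by (simp only: of_nat_mult of_nat_add of_nat_numeral of_nat_1)
qed

lemma c1_gen:
  fixes X Y K F :: real
  assumes "0 < K" "0 < F" "X = 2 * (2 * K - 1) * Y / K"
  shows "X / (4 * F) = Y / F * ((2 * K - 1) / (2 * K))"
  using assms by (simp add: field_simps)

lemma c1_aux:
  fixes X Y :: real and k :: nat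
  assumes "X = 2 * (2 * real k + 1) * Y / real (Suc k)"
  shows "X / 4 ^ Suc k = Y / 4 ^ k * ((2 * real k + 1) / (2 * real k + 2))"
proof -
  have e1: "2 * real k + 1 = 2 * (real k + 1) - 1" "2 * real k + 2 = 2 * (real k + 1)" by simp_all
  have "X = 2 * (2 * (real k + 1) - 1) * Y / (real k + 1)" using assms by (simp add: algebra_simps)
  from c1_gen[OF _ _ this] have "X / (4 * 4 ^ k) = Y / 4 ^ k * ((2 * (real k + 1) - 1) / (2 * (real k + 1)))"
    by simp
  then show ?thesis unfolding e1 by simp
qed

lemma Q_gen:
  fixes a b c p q :: real
  assumes "0 < a" "0 < b"
  shows "(c * (p / b))^2 * q = (c^2 * a) * (p^2 * q / (a * b^2))"
  using assms by (simp add: field_simps power2_eq_square)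

lemma central_bound: "(real ((2 * k) choose k) / 4 ^ k)^2 * (3 * real k + 1) \<le> 1"
proof (induction k)
  case 0 then show ?case by simp
next
  case (Suc k)
  define c where "c = real ((2 * k) choose k) / 4 ^ k"
  have c1: "real ((2 * Suc k) choose Suc k) / 4 ^ Suc k = c * ((2 * real k + 1) / (2 * real k + 2))"
  proof -
    have "real ((2 * Suc k) choose Suc k) = 2 * (2 * real k + 1) * real ((2 * k) choose k) / real (Suc k)"
      using central_rec[of k] by (simp add: field_simps del: binomial_Suc_Suc)
    then show ?thesis unfolding c_def by (rule c1_aux)
  qed
  define Q where "Q = (2 * real k + 1)^2 * (3 * real k + 4) / ((3 * real k + 1) * (2 * real k + 2)^2)"
  have Q: "Q \<le> 1" "0 \<le> Q"
  proof -
    have "(2 * real k + 1)^2 * (3 * real k + 4) \<le> (3 * real k + 1) * (2 * real k + 2)^2"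
      by (simp add: power2_eq_square algebra_simps)
    then show "Q \<le> 1" unfolding Q_def by (simp add: divide_le_eq_1)
    show "0 \<le> Q" unfolding Q_def by simp
  qed
  have "(c * ((2 * real k + 1) / (2 * real k + 2)))^2 * (3 * real (Suc k) + 1) = (c * ((2 * real k + 1) / (2 * real k + 2)))^2 * (3 * real k + 4)"
    by simp
  also have "\<dots> = (c^2 * (3 * real k + 1)) * Q"
    unfolding Q_def by (rule Q_gen) auto
  also have "\<dots> \<le> 1 * Q" using Suc.IH Q unfolding c_def by (intro mult_right_mono) auto
  finally show ?case using Q unfolding c1 by simp
qed

lemma bern_le_half:
  assumes "0 < k" "k < n" "2 * k \<le> n" "0 \<le> x" "x \<le> 1"
  shows "Bernstein n k x \<le> 1 / sqrt (2 * (real k + 1))"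
proof -
  define c where "c = real ((2 * k) choose k) / 4 ^ k"
  have "Bernstein n k x \<le> Mx n k" using assms by (intro bern_le_Mx) auto
  also have "\<dots> \<le> Mx (2 * k) k" using assms by (intro Mx_chain) auto
  also have "\<dots> = c" unfolding c_def using assms by (simp add: Mx_central)
  also have "c \<le> 1 / sqrt (2 * (real k + 1))"
  proof -
    have c0: "0 \<le> c" by (simp add: c_def)
    have "c^2 * (3 * real k + 1) \<le> 1" unfolding c_def by (rule central_bound)
    moreover have "2 * (real k + 1) \<le> 3 * real k + 1" using assms by simp
    ultimately have "c^2 * (2 * (real k + 1)) \<le> 1"
    proof -
      have "c^2 * (2 * (real k + 1)) \<le> c^2 * (3 * real k + 1)"
        using \<open>2 * (real k + 1) \<le> 3 * real k + 1\<close> by (intro mult_left_mono) auto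
      then show ?thesis using \<open>c^2 * (3 * real k + 1) \<le> 1\<close> by linarith
    qed
    then have "c^2 \<le> 1 / (2 * (real k + 1))" by (simp add: le_divide_eq)
    then have "c \<le> sqrt (1 / (2 * (real k + 1)))" by (rule real_le_rsqrt)
    then show ?thesis by (simp add: real_sqrt_divide)
  qed
  finally show ?thesis .
qed

lemma bern_sym: "k \<le> n \<Longrightarrow> Bernstein n k x = Bernstein n (n - k) (1 - x)"
  by (simp add: Bernstein_def binomial_symmetric[symmetric] algebra_simps)

lemma bern_le_min:
  assumes "0 < k" "k < n" "0 \<le> x" "x \<le> 1"
  shows "Bernstein n k x \<le> 1 / sqrt (2 * (real (min k (n - k)) + 1))"
proof (cases "2 * k \<le> n")
  case True
  then have "min k (n - k) = k" by simp
  then show ?thesis using bern_le_half[OF assms(1,2) True assms(3,4)] by simp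
next
  case False
  then have mk: "min k (n - k) = n - k" by simp
  have "Bernstein n k x = Bernstein n (n - k) (1 - x)" using assms by (intro bern_sym) auto
  also have "\<dots> \<le> 1 / sqrt (2 * (real (n - k) + 1))"
    using assms False by (intro bern_le_half) auto
  finally show ?thesis using mk by simp
qed




lemma abel_id:
  fixes D p :: "nat \<Rightarrow> real"
  assumes "1 \<le> a" "a \<le> b" "D (a - 1) = 0"
  shows "(\<Sum>k\<in>{a..b}. (D k - D (k - 1)) * p k) = D b * p b + (\<Sum>k\<in>{a..<b}. D k * (p k - p (Suc k)))"
  using assms(2)
proof (induction b rule: dec_induct)
  case base
  then show ?case using assms by simp
next
  case (step j)
  have "(\<Sum>k\<in>{a..Suc j}. (D k - D (k - 1)) * p k) = (\<Sum>k\<in>{a..j}. (D k - D (k - 1)) * p k) + (D (Suc j) - D j) * p (Suc j)"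
    using step.hyps by (simp add: sum.cl_ivl_Suc)
  also have "\<dots> = D j * p j + (\<Sum>k\<in>{a..<j}. D k * (p k - p (Suc k))) + (D (Suc j) - D j) * p (Suc j)"
    using step.IH by simp
  also have "\<dots> = D (Suc j) * p (Suc j) + ((\<Sum>k\<in>{a..<j}. D k * (p k - p (Suc k))) + D j * (p j - p (Suc j)))"
    by (simp add: algebra_simps)
  also have "\<dots> = D (Suc j) * p (Suc j) + (\<Sum>k\<in>{a..<Suc j}. D k * (p k - p (Suc k)))"
    using step.hyps by simp
  finally show ?case .
qed

lemma tv_unimodal:
  fixes p :: "nat \<Rightarrow> real"
  assumes "a \<le> m" "m \<le> b"
    and inc: "\<And>k. a \<le> k \<Longrightarrow> k < m \<Longrightarrow> p k \<le> p (Suc k)"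
    and dec: "\<And>k. m \<le> k \<Longrightarrow> k < b \<Longrightarrow> p (Suc k) \<le> p k"
  shows "(\<Sum>k\<in>{a..<b}. \<bar>p k - p (Suc k)\<bar>) = (p m - p a) + (p m - p b)"
proof -
  have "(\<Sum>k\<in>{a..<b}. \<bar>p k - p (Suc k)\<bar>) = (\<Sum>k\<in>{a..<m}. \<bar>p k - p (Suc k)\<bar>) + (\<Sum>k\<in>{m..<b}. \<bar>p k - p (Suc k)\<bar>)"
    using assms(1,2) by (simp add: sum.atLeastLessThan_concat)
  also have "(\<Sum>k\<in>{a..<m}. \<bar>p k - p (Suc k)\<bar>) = (\<Sum>k\<in>{a..<m}. p (Suc k) - p k)"
    by (rule sum.cong) (use inc in auto)
  also have "\<dots> = p m - p a" using assms(1) by (rule sum_Suc_diff')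
  also have "(\<Sum>k\<in>{m..<b}. \<bar>p k - p (Suc k)\<bar>) = - (\<Sum>k\<in>{m..<b}. p (Suc k) - p k)"
    by (subst sum_negf[symmetric], rule sum.cong) (use dec in auto)
  also have "(\<Sum>k\<in>{m..<b}. p (Suc k) - p k) = p b - p m" using assms(2) by (rule sum_Suc_diff')
  finally show ?thesis by simp
qed

lemma abel_bound:
  fixes D p :: "nat \<Rightarrow> real"
  assumes "1 \<le> a" "a \<le> m" "m \<le> b" "D (a - 1) = 0"
    and Dle: "\<And>k. a \<le> k \<Longrightarrow> k \<le> b \<Longrightarrow> \<bar>D k\<bar> \<le> 1/2"
    and p0: "\<And>k. 0 \<le> p k"
    and inc: "\<And>k. a \<le> k \<Longrightarrow> k < m \<Longrightarrow> p k \<le> p (Suc k)"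
    and dec: "\<And>k. m \<le> k \<Longrightarrow> k < b \<Longrightarrow> p (Suc k) \<le> p k"
  shows "\<bar>\<Sum>k\<in>{a..b}. (D k - D (k - 1)) * p k\<bar> \<le> p m"
proof -
  have "\<bar>\<Sum>k\<in>{a..b}. (D k - D (k - 1)) * p k\<bar> = \<bar>D b * p b + (\<Sum>k\<in>{a..<b}. D k * (p k - p (Suc k)))\<bar>"
    using assms by (subst abel_id) auto
  also have "\<dots> \<le> \<bar>D b * p b\<bar> + \<bar>\<Sum>k\<in>{a..<b}. D k * (p k - p (Suc k))\<bar>" by (rule abs_triangle_ineq)
  also have "\<bar>D b * p b\<bar> \<le> 1/2 * p b"
  proof -
    have "\<bar>D b\<bar> \<le> 1/2" using Dle[of b] assms by simp
    then have "\<bar>D b\<bar> * p b \<le> 1/2 * p b" using p0[of b] by (rule mult_right_mono)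
    then show ?thesis using p0[of b] by (simp add: abs_mult)
  qed
  also have "\<bar>\<Sum>k\<in>{a..<b}. D k * (p k - p (Suc k))\<bar> \<le> (\<Sum>k\<in>{a..<b}. \<bar>D k * (p k - p (Suc k))\<bar>)"
    by (rule sum_abs)
  also have "\<dots> \<le> (\<Sum>k\<in>{a..<b}. 1/2 * \<bar>p k - p (Suc k)\<bar>)"
  proof (rule sum_mono)
    fix k assume k: "k \<in> {a..<b}"
    have "\<bar>D k\<bar> \<le> 1/2" using Dle k by simp
    then have "\<bar>D k\<bar> * \<bar>p k - p (Suc k)\<bar> \<le> 1/2 * \<bar>p k - p (Suc k)\<bar>" by (rule mult_right_mono) simp
    then show "\<bar>D k * (p k - p (Suc k))\<bar> \<le> 1/2 * \<bar>p k - p (Suc k)\<bar>" by (simp add: abs_mult)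
  qed
  also have "\<dots> = 1/2 * ((p m - p a) + (p m - p b))"
    unfolding sum_distrib_left[symmetric] using tv_unimodal[of a m b p, OF assms(2,3) inc dec] by simp
  finally show ?thesis using p0[of a] by (simp add: field_simps)
qed

lemma bern_step_sign:
  assumes "k < n" "0 < x" "x < 1"
  shows "real (Suc k) * (1 - x) * (Bernstein n (Suc k) x - Bernstein n k x) = ((real n + 1) * x - real (Suc k)) * Bernstein n k x"
proof -
  have "real (Suc k) * (1 - x) * (Bernstein n (Suc k) x - Bernstein n k x)
      = real (Suc k) * (1 - x) * Bernstein n (Suc k) x - real (Suc k) * (1 - x) * Bernstein n k x"
    by (simp add: algebra_simps)
  also have "\<dots> = real (n - k) * x * Bernstein n k x - real (Suc k) * (1 - x) * Bernstein n k x"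
    using bern_ratio[OF assms(1)] by simp
  also have "\<dots> = ((real n + 1) * x - real (Suc k)) * Bernstein n k x"
    using assms(1) by (simp add: of_nat_diff algebra_simps)
  finally show ?thesis .
qed

lemma bern_inc:
  assumes "k < n" "0 < x" "x < 1" "real (Suc k) \<le> (real n + 1) * x"
  shows "Bernstein n k x \<le> Bernstein n (Suc k) x"
proof -
  have "0 \<le> ((real n + 1) * x - real (Suc k)) * Bernstein n k x"
    using assms by (intro mult_nonneg_nonneg Bernstein_nonneg) auto
  then have "0 \<le> real (Suc k) * (1 - x) * (Bernstein n (Suc k) x - Bernstein n k x)"
    using bern_step_sign[OF assms(1-3)] by simp
  moreover have "0 < real (Suc k) * (1 - x)" using assms by simp
  ultimately show ?thesis by (simp add: zero_le_mult_iff)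
qed

lemma bern_dec:
  assumes "k < n" "0 < x" "x < 1" "(real n + 1) * x \<le> real (Suc k)"
  shows "Bernstein n (Suc k) x \<le> Bernstein n k x"
proof -
  have "((real n + 1) * x - real (Suc k)) * Bernstein n k x \<le> 0"
    using assms by (intro mult_nonpos_nonneg Bernstein_nonneg) auto
  then have "real (Suc k) * (1 - x) * (Bernstein n (Suc k) x - Bernstein n k x) \<le> 0"
    using bern_step_sign[OF assms(1-3)] by simp
  moreover have "0 < real (Suc k) * (1 - x)" using assms by simp
  ultimately show ?thesis using assms(3) by (simp add: mult_le_0_iff)
qed




lemma round_half:
  fixes y :: real
  shows "\<bar>y - real_of_int \<lfloor>y + 1/2\<rfloor>\<bar> \<le> 1/2"
proof -
  have "real_of_int \<lfloor>y + 1/2\<rfloor> \<le> y + 1/2" by (rule of_int_floor_le)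
  moreover have "y + 1/2 < real_of_int \<lfloor>y + 1/2\<rfloor> + 1" by (rule real_of_int_floor_add_one_gt)
  ultimately show ?thesis by linarith
qed

lemma bern_zero_mid: "0 < k \<Longrightarrow> k < n \<Longrightarrow> (x = 0 \<or> x = 1) \<Longrightarrow> Bernstein n k x = 0"
  by (auto simp: Bernstein_def)

lemma middle_bound:
  fixes D :: "nat \<Rightarrow> real"
  assumes "n > 0" "1 \<le> a" "a \<le> b" "b + a = n" "D (a - 1) = 0"
    and Dle: "\<And>k. a \<le> k \<Longrightarrow> k \<le> b \<Longrightarrow> \<bar>D k\<bar> \<le> 1/2"
    and x: "0 \<le> x" "x \<le> 1"
  shows "\<bar>\<Sum>k\<in>{a..b}. (D k - D (k - 1)) * Bernstein n k x\<bar> \<le> 1 / sqrt (2 * (real a + 1))"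
proof (cases "x = 0 \<or> x = 1")
  case True
  have "(\<Sum>k\<in>{a..b}. (D k - D (k - 1)) * Bernstein n k x) = 0"
    by (rule sum.neutral) (use assms True in \<open>auto intro!: bern_zero_mid\<close>)
  then show ?thesis by simp
next
  case False
  then have x01: "0 < x" "x < 1" using x by auto
  define c where "c = (real n + 1) * x"
  have c0: "0 < c" using x01 by (simp add: c_def)
  define m0 where "m0 = nat \<lceil>c\<rceil> - 1"
  define m where "m = max a (min b m0)"
  have m: "a \<le> m" "m \<le> b" using assms by (auto simp: m_def)
  have inc: "Bernstein n k x \<le> Bernstein n (Suc k) x" if "a \<le> k" "k < m" for k
  proof (rule bern_inc)
    show "k < n" using that m assms by linarith
    have "k < m0" using that by (auto simp: m_def)
    then have "real k + 2 \<le> real_of_int \<lceil>c\<rceil>" unfolding m0_def using c0 by linarith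
    then show "real (Suc k) \<le> (real n + 1) * x" unfolding c_def by linarith
  qed (use x01 in auto)
  have dec: "Bernstein n (Suc k) x \<le> Bernstein n k x" if "m \<le> k" "k < b" for k
  proof (rule bern_dec)
    show "k < n" using that m assms by linarith
    have "m0 \<le> k" using that by (auto simp: m_def)
    then have "real_of_int \<lceil>c\<rceil> \<le> real k + 1" unfolding m0_def using c0 by linarith
    then show "(real n + 1) * x \<le> real (Suc k)" unfolding c_def by linarith
  qed (use x01 in auto)
  have "\<bar>\<Sum>k\<in>{a..b}. (D k - D (k - 1)) * Bernstein n k x\<bar> \<le> Bernstein n m x"
    by (rule abel_bound[of a m b D "\<lambda>k. Bernstein n k x", OF assms(2) m assms(5) Dle]) (use x inc dec in \<open>auto intro: Bernstein_nonneg\<close>)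
  also have "\<dots> \<le> 1 / sqrt (2 * (real (min m (n - m)) + 1))"
    using m assms x by (intro bern_le_min) auto
  also have "\<dots> \<le> 1 / sqrt (2 * (real a + 1))"
  proof -
    have "a \<le> min m (n - m)" using m assms by auto
    then show ?thesis by (intro divide_left_mono real_sqrt_le_mono mult_left_mono) auto
  qed
  finally show ?thesis .
qed




lemma int_floor_eq: "y \<in> \<int> \<Longrightarrow> real_of_int \<lfloor>y\<rfloor> = y"
  by (metis Ints_cases floor_of_int)

lemma round_main:
  assumes cont: "continuous_on {0..1} (f::real\<Rightarrow>real)"
    and f0: "f 0 \<in> \<int>" and f1: "f 1 \<in> \<int>" and n: "n > 0" and t: "t \<le> n div 2"
  obtains q :: "nat \<Rightarrow> int" where
    "\<And>x. x \<in> {0..1} \<Longrightarrow> \<bar>\<Sum>k\<le>n. (f (real k / real n) - real_of_int (q k)) * Bernstein n k x\<bar>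
        \<le> modcont f (real t / real n) + 1 / sqrt (2 * (real t + 1))"
proof -
  define a where "a = max t 1"
  define b where "b = n - a"
  have a1: "1 \<le> a" "t \<le> a" "a - 1 \<le> t" unfolding a_def by auto
  have ab: "b + a = n" unfolding b_def a_def using n t by auto
  define g where "g k = f (real k / real n)" for k
  define C where "C k = (\<Sum>j\<in>{a..k}. g j)" for k
  define r where "r y = \<lfloor>y + 1/2\<rfloor>" for y :: real
  define D where "D k = C k - real_of_int (r (C k))" for k
  define q where "q k = (if k < a then \<lfloor>f 0\<rfloor> else if b < k then \<lfloor>f 1\<rfloor> else r (C k) - r (C (k - 1)))" for k
  define w where "w = modcont f (real t / real n)"
  have w0: "0 \<le> w" unfolding w_def using mc_nonneg[OF cont] by simp
  have Dle: "\<bar>D k\<bar> \<le> 1/2" for k unfolding D_def r_def by (rule round_half)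
  have Da: "D (a - 1) = 0"
  proof -
    have "C (a - 1) = 0" unfolding C_def using a1 by simp
    then show ?thesis unfolding D_def r_def by simp
  qed
  have emid: "f (real k / real n) - real_of_int (q k) = D k - D (k - 1)" if "k \<in> {a..b}" for k
  proof -
    have k: "a \<le> k" "k \<le> b" using that by auto
    then have q: "q k = r (C k) - r (C (k - 1))" unfolding q_def by auto
    have hk: "Suc (k - 1) = k" using k a1 by simp
    have "C (Suc (k - 1)) = C (k - 1) + g (Suc (k - 1))" unfolding C_def
      by (subst sum.cl_ivl_Suc) (use k a1 hk in auto)
    then have "C k = C (k - 1) + g k" unfolding hk .
    then show ?thesis unfolding q D_def g_def by simp
  qed
  show ?thesis
  proof (rule that[of q])
    fix x :: real assume x: "x \<in> {0..1}"
    define e where "e k = f (real k / real n) - real_of_int (q k)" for k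
    define Out where "Out = {..n} - {a..b}"
    have B0: "0 \<le> Bernstein n k x" for k using x by (intro Bernstein_nonneg) auto
    have sub: "{a..b} \<subseteq> {..n}" using ab by auto
    have split: "(\<Sum>k\<le>n. e k * Bernstein n k x) = (\<Sum>k\<in>Out. e k * Bernstein n k x) + (\<Sum>k\<in>{a..b}. e k * Bernstein n k x)"
      unfolding Out_def by (rule sum.subset_diff[OF sub]) simp
    have outer: "\<bar>\<Sum>k\<in>Out. e k * Bernstein n k x\<bar> \<le> w"
    proof -
      have "\<bar>\<Sum>k\<in>Out. e k * Bernstein n k x\<bar> \<le> (\<Sum>k\<in>Out. \<bar>e k * Bernstein n k x\<bar>)" by (rule sum_abs)
      also have "\<dots> \<le> (\<Sum>k\<in>Out. w * Bernstein n k x)"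
      proof (rule sum_mono)
        fix k assume k: "k \<in> Out"
        have kn: "k \<le> n" using k by (simp add: Out_def)
        have "\<bar>e k\<bar> \<le> w"
        proof (cases "k < a")
          case True
          then have "e k = f (real k / real n) - f 0" unfolding e_def q_def using int_floor_eq[OF f0] by simp
          moreover have "\<bar>real k / real n - 0\<bar> \<le> real t / real n"
            using True a1 n by (simp add: divide_right_mono a_def)
          ultimately show ?thesis unfolding w_def using kn n by (simp add: mc_le[OF cont])
        next
          case False
          then have "b < k" using k by (auto simp: Out_def)
          then have "e k = f (real k / real n) - f 1" unfolding e_def q_def using False int_floor_eq[OF f1] by simp
          moreover have "\<bar>real k / real n - 1\<bar> \<le> real t / real n"
          proof -
            have "n - k \<le> t" using \<open>b < k\<close> ab a1 by linarith
            then have "real n - real k \<le> real t" using kn by linarith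
            moreover have "\<bar>real k / real n - 1\<bar> = (real n - real k) / real n"
              using kn n by (simp add: field_simps)
            ultimately show ?thesis by (simp add: divide_right_mono)
          qed
          ultimately show ?thesis unfolding w_def using kn n by (simp add: mc_le[OF cont])
        qed
        then show "\<bar>e k * Bernstein n k x\<bar> \<le> w * Bernstein n k x"
          using B0[of k] by (simp add: abs_mult mult_right_mono)
      qed
      also have "\<dots> \<le> (\<Sum>k\<le>n. w * Bernstein n k x)"
        by (rule sum_mono2) (use w0 B0 in \<open>auto simp: Out_def\<close>)
      also have "\<dots> = w" by (simp add: sum_distrib_left[symmetric])
      finally show ?thesis .
    qed
    have middle: "\<bar>\<Sum>k\<in>{a..b}. e k * Bernstein n k x\<bar> \<le> 1 / sqrt (2 * (real t + 1))"
    proof (cases "a \<le> b")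
      case True
      have "(\<Sum>k\<in>{a..b}. e k * Bernstein n k x) = (\<Sum>k\<in>{a..b}. (D k - D (k - 1)) * Bernstein n k x)"
        by (rule sum.cong) (simp_all add: e_def emid)
      also have "\<bar>\<dots>\<bar> \<le> 1 / sqrt (2 * (real a + 1))"
        by (rule middle_bound[of n a b D, OF n a1(1) True ab Da]) (use Dle x in auto)
      also have "\<dots> \<le> 1 / sqrt (2 * (real t + 1))"
        using a1 by (intro divide_left_mono real_sqrt_le_mono mult_left_mono) auto
      finally show ?thesis .
    next
      case False
      then show ?thesis by simp
    qed
    have "\<bar>\<Sum>k\<le>n. e k * Bernstein n k x\<bar> \<le> w + 1 / sqrt (2 * (real t + 1))"
      unfolding split using outer middle by linarith
    then show "\<bar>\<Sum>k\<le>n. (f (real k / real n) - real_of_int (q k)) * Bernstein n k x\<bar>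
        \<le> modcont f (real t / real n) + 1 / sqrt (2 * (real t + 1))"
      by (simp add: e_def w_def)
  qed
qed




definition Fr :: "(real \<Rightarrow> real) \<Rightarrow> nat \<Rightarrow> nat \<Rightarrow> real" where
  "Fr f n t = max (modcont f (real t / real n)) (1 / (2 * (real n + 1 - 2 * real t)))
                      + 1 / sqrt (2 * (real t + 1))"

lemma rho_Fr: "rho f n = Min (Fr f n ` {0 .. n div 2})"
  unfolding rho_def Fr_def ..

lemma rho_attained: obtains t where "t \<le> n div 2" "rho f n = Fr f n t"
proof -
  have "rho f n \<in> Fr f n ` {0 .. n div 2}" unfolding rho_Fr by (rule Min_in) auto
  then show ?thesis using that by auto
qed

lemma rho_le: "t \<le> n div 2 \<Longrightarrow> rho f n \<le> Fr f n t"
  unfolding rho_Fr by (rule Min_le) auto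

lemma lattice_cont:
  assumes "P \<in> bernstein_lattice n"
  shows "continuous_on {0..1} P"
proof -
  obtain q :: "nat \<Rightarrow> int" where P: "P = (\<lambda>x. \<Sum>k\<le>n. real_of_int (q k) * bern n k x)"
    using assms by (auto simp: bernstein_lattice_def)
  show ?thesis unfolding P bern_def by (intro continuous_intros)
qed

lemma dinf_nonneg:
  assumes "continuous_on {0..1} (f::real\<Rightarrow>real)" "continuous_on {0..1} P"
  shows "0 \<le> dinf f P"
proof -
  have c: "continuous_on {0..1} (\<lambda>x. \<bar>f x - P x\<bar>)" using assms by (intro continuous_intros)
  have "compact ((\<lambda>x. \<bar>f x - P x\<bar>) ` {0..1::real})" by (rule compact_continuous_image[OF c]) simp
  then have "bounded ((\<lambda>x. \<bar>f x - P x\<bar>) ` {0..1::real})" by (rule compact_imp_bounded)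
  then have bdd: "bdd_above ((\<lambda>x. \<bar>f x - P x\<bar>) ` {0..1::real})" by (rule bounded_imp_bdd_above)
  have "\<bar>f 0 - P 0\<bar> \<le> dinf f P" unfolding dinf_def by (rule cSUP_upper[OF _ bdd]) simp
  then show ?thesis by linarith
qed

lemma dinf_set_le:
  assumes cont: "continuous_on {0..1} (f::real\<Rightarrow>real)"
    and bnd: "\<And>x. x \<in> {0..1} \<Longrightarrow> \<bar>f x - (\<Sum>k\<le>n. real_of_int (q k) * bern n k x)\<bar> \<le> B"
  shows "dinf_set f (bernstein_lattice n) \<le> B"
proof -
  define P where "P = (\<lambda>x. \<Sum>k\<le>n. real_of_int (q k) * bern n k x)"
  have PL: "P \<in> bernstein_lattice n" unfolding P_def bernstein_lattice_def by auto
  have "dinf f P \<le> B" unfolding dinf_def by (rule cSUP_least) (use bnd in \<open>auto simp: P_def\<close>)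
  moreover have "dinf_set f (bernstein_lattice n) \<le> dinf f P"
    unfolding dinf_set_def
  proof (rule cINF_lower[OF _ PL])
    show "bdd_below (dinf f ` bernstein_lattice n)"
      by (rule bdd_belowI2[of _ 0]) (use cont in \<open>auto intro: dinf_nonneg lattice_cont\<close>)
  qed
  ultimately show ?thesis by linarith
qed

lemma first_claim:
  assumes cont: "continuous_on {0..1} (f::real\<Rightarrow>real)"
    and f0: "f 0 \<in> \<int>" and f1: "f 1 \<in> \<int>" and n: "n > 0"
  shows "dinf_set f (bernstein_lattice n) \<le> 5 / 4 * modcont f (1 / sqrt (real n)) + rho f n"
proof -
  obtain t where t: "t \<le> n div 2" "rho f n = Fr f n t" by (rule rho_attained)
  obtain q :: "nat \<Rightarrow> int" where q: "\<And>x. x \<in> {0..1} \<Longrightarrow> \<bar>\<Sum>k\<le>n. (f (real k / real n) - real_of_int (q k)) * Bernstein n k x\<bar>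
        \<le> modcont f (real t / real n) + 1 / sqrt (2 * (real t + 1))"
    using round_main[OF cont f0 f1 n t(1)] by blast
  show ?thesis
  proof (rule dinf_set_le[OF cont])
    fix x :: real assume x: "x \<in> {0..1}"
    have split: "f x - (\<Sum>k\<le>n. real_of_int (q k) * bern n k x)
       = (f x - (\<Sum>k\<le>n. f (real k / real n) * Bernstein n k x)) + (\<Sum>k\<le>n. (f (real k / real n) - real_of_int (q k)) * Bernstein n k x)"
      by (simp add: bern_eq left_diff_distrib sum_subtractf)
    have "\<bar>f x - (\<Sum>k\<le>n. real_of_int (q k) * bern n k x)\<bar>
       \<le> \<bar>f x - (\<Sum>k\<le>n. f (real k / real n) * Bernstein n k x)\<bar> + \<bar>\<Sum>k\<le>n. (f (real k / real n) - real_of_int (q k)) * Bernstein n k x\<bar>"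
      unfolding split by (rule abs_triangle_ineq)
    also have "\<dots> \<le> 5 / 4 * modcont f (1 / sqrt (real n)) + (modcont f (real t / real n) + 1 / sqrt (2 * (real t + 1)))"
      by (intro add_mono bern_approx[OF cont n x] q[OF x])
    also have "\<dots> \<le> 5 / 4 * modcont f (1 / sqrt (real n)) + rho f n"
      unfolding t(2) Fr_def by simp
    finally show "\<bar>f x - (\<Sum>k\<le>n. real_of_int (q k) * bern n k x)\<bar> \<le> 5 / 4 * modcont f (1 / sqrt (real n)) + rho f n" .
  qed
qed




lemma cube_ineq:
  fixes s :: real
  assumes "1 \<le> s"
  shows "s \<le> 2 * (s ^ 3 + 1 - s ^ 2)"
proof (cases "s \<le> 2")
  case True
  have "0 \<le> 2 * s^2 * (s - 1)" using assms by simp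
  then show ?thesis using True by (simp add: power2_eq_square power3_eq_cube algebra_simps)
next
  case False
  have "2 * s * (s - 1) \<ge> 2 * s * 1" using False assms by (intro mult_left_mono) auto
  then have "s * (2 * s * (s - 1)) \<ge> s * (2 * s)" using assms by (intro mult_left_mono) auto
  moreover have "s * (2 * s) \<ge> s" using assms False by (simp add: power2_eq_square)
  ultimately show ?thesis by (simp add: power2_eq_square power3_eq_cube algebra_simps)
qed

lemma second_claim:
  assumes cont: "continuous_on {0..1} (f::real\<Rightarrow>real)" and n: "n > 0"
  shows "rho f n \<le> modcont f (1 / 2 * real n powr (-1/3)) + 2 * real n powr (-1/3)"
proof -
  define s where "s = real n powr (1/3)"
  have n1: "1 \<le> real n" using n by simp
  have s1: "1 \<le> s" unfolding s_def using n1 by (intro ge_one_powr_ge_zero) auto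
  have s3: "s ^ 3 = real n" unfolding s_def using n by (simp add: powr_power)
  have sm: "real n powr (-1/3) = 1 / s" unfolding s_def by (simp add: powr_minus_divide)
  define t where "t = nat \<lfloor>s^2 / 2\<rfloor>"
  have y0: "0 \<le> s^2 / 2" by simp
  have tf: "real t = real_of_int \<lfloor>s^2 / 2\<rfloor>" unfolding t_def using y0 by simp
  have t1: "real t \<le> s^2 / 2" "s^2 / 2 < real t + 1" unfolding tf
    by (rule of_int_floor_le, rule real_of_int_floor_add_one_gt)
  have s23: "s^2 \<le> s^3" using s1 by (simp add: power_increasing)
  have tn: "t \<le> n div 2"
  proof -
    have "real (2 * t) \<le> real n" using t1 s23 s3 by simp
    then have "2 * t \<le> n" by linarith
    then show ?thesis by simp
  qed
  have w0: "0 \<le> modcont f (real t / real n)" using mc_nonneg[OF cont] by simp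
  have A: "modcont f (real t / real n) \<le> modcont f (1 / 2 * real n powr (-1/3))"
  proof (rule mc_mono[OF cont])
    show "0 \<le> real t / real n" by simp
    have "real t / real n \<le> (s^2 / 2) / s^3" unfolding s3 using t1(1) by (rule divide_right_mono) simp
    also have "\<dots> = 1 / 2 * (1 / s)" using s1 by (simp add: power2_eq_square power3_eq_cube field_simps)
    finally show "real t / real n \<le> 1 / 2 * real n powr (-1/3)" unfolding sm .
  qed
  have B: "1 / (2 * (real n + 1 - 2 * real t)) \<le> 1 / s" and B0: "0 \<le> 1 / (2 * (real n + 1 - 2 * real t))"
  proof -
    have h1: "s^3 + 1 - s^2 \<le> real n + 1 - 2 * real t" using s3 t1 by simp
    have h: "s \<le> 2 * (real n + 1 - 2 * real t)"
      by (rule order_trans[OF cube_ineq[OF s1]]) (use h1 in simp)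
    then show "1 / (2 * (real n + 1 - 2 * real t)) \<le> 1 / s" using s1 by (intro divide_left_mono) auto
    show "0 \<le> 1 / (2 * (real n + 1 - 2 * real t))" using h s1 by simp
  qed
  have C: "1 / sqrt (2 * (real t + 1)) \<le> 1 / s"
  proof -
    have "s^2 \<le> 2 * (real t + 1)" using t1 by simp
    then have "sqrt (s^2) \<le> sqrt (2 * (real t + 1))" by (rule real_sqrt_le_mono)
    then have "s \<le> sqrt (2 * (real t + 1))" using s1 by simp
    then show ?thesis using s1 by (intro divide_left_mono) auto
  qed
  have "rho f n \<le> Fr f n t" by (rule rho_le[OF tn])
  also have "\<dots> \<le> modcont f (real t / real n) + 1 / (2 * (real n + 1 - 2 * real t)) + 1 / sqrt (2 * (real t + 1))"
    unfolding Fr_def using w0 B0 by simp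
  also have "\<dots> \<le> modcont f (1 / 2 * real n powr (-1/3)) + 1 / s + 1 / s"
    using A B C by linarith
  finally show ?thesis unfolding sm by simp
qed

theorem mainTheorem1:
  fixes f :: "real \<Rightarrow> real" and n :: nat
  assumes "continuous_on {0..1} f"
    and "f 0 \<in> \<int>" and "f 1 \<in> \<int>"
    and "n > 0"
  shows "dinf_set f (bernstein_lattice n)
           \<le> 5 / 4 * modcont f (1 / sqrt (real n)) + rho f n
       \<and> rho f n \<le> modcont f (1 / 2 * real n powr (-1/3)) + 2 * real n powr (-1/3)
       \<and> dinf_set f (bernstein_lattice n)
           \<le> 9 / 4 * modcont f (real n powr (-1/3)) + 2 * real n powr (-1/3)"
proof -
  have c1: "dinf_set f (bernstein_lattice n) \<le> 5 / 4 * modcont f (1 / sqrt (real n)) + rho f n"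
    by (rule first_claim[OF assms])
  have c2: "rho f n \<le> modcont f (1 / 2 * real n powr (-1/3)) + 2 * real n powr (-1/3)"
    by (rule second_claim[OF assms(1,4)])
  have n1: "1 \<le> real n" using assms by simp
  have p0: "0 \<le> real n powr (-1/3)" by simp
  have m1: "modcont f (1 / sqrt (real n)) \<le> modcont f (real n powr (-1/3))"
  proof (rule mc_mono[OF assms(1)])
    show "0 \<le> 1 / sqrt (real n)" by simp
    have "real n powr (1/3) \<le> real n powr (1/2)" using n1 by (intro powr_mono) auto
    then have "1 / real n powr (1/2) \<le> 1 / real n powr (1/3)"
      using n1 by (intro divide_left_mono) auto
    then show "1 / sqrt (real n) \<le> real n powr (-1/3)"
      using n1 by (simp add: powr_half_sqrt powr_minus_divide)
  qed
  have m2: "modcont f (1 / 2 * real n powr (-1/3)) \<le> modcont f (real n powr (-1/3))"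
    using p0 by (intro mc_mono[OF assms(1)]) auto
  have "dinf_set f (bernstein_lattice n) \<le> 9 / 4 * modcont f (real n powr (-1/3)) + 2 * real n powr (-1/3)"
    using c1 c2 m1 m2 by linarith
  then show ?thesis using c1 c2 by blast
qed


end
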